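(* Let $(a_n)_{n\in\mathbb{Z}}$ be real numbers with $0\ne|a_n|\le C' r^{|n|}$ for all $n\in\mathbb{Z}$, for some constants $C'>0$, $0<r<1$. Let $0<\rho<\pi$ and $g\in B_\rho$. If there is a constant $C>0$ such that $|g(n+a_n)|\le C|a_n|$ for all $n\in\mathbb{Z}$, then $g\equiv0$.
   Context: $B_\rho$ is the Bernstein space of entire functions $F$ satisfying $|F(x+iy)|\le C_F e^{\rho|y|}$ for all $x+iy\in\mathbb{C}$, with $C_F>0$ depending on $F$. *)

theory Defs
  imports "HOL-Analysis.Analysis"
begin

definition bernstein_space :: "real \<Rightarrow> (complex \<Rightarrow> complex) set" where
  "bernstein_space \<rho> = {F. F holomorphic_on UNIV \<and>
     (\<exists>C>0. \<forall>z. norm (F z) \<le> C * exp (\<rho> * \<bar>Im z\<bar>))}"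

end

theory Submission
  imports Defs "HOL-Complex_Analysis.Complex_Analysis" "HOL-Real_Asymp.Real_Asymp"
begin

lemma norm_sin_le_exp: "norm (sin (z::complex)) \<le> exp \<bar>Im z\<bar>"
proof -
  have "norm (sin z) ^ 2 = (exp(2 * Im z) + inverse(exp(2 * Im z)) - 2 * cos(2 * Re z)) / 4"
    by (rule norm_sin_squared)
  also have "\<dots> \<le> (exp(2 * Im z) + inverse(exp(2 * Im z)) + 2) / 4"
    using cos_ge_minus_one[of "2 * Re z"] by (intro divide_right_mono) linarith+
  also have "\<dots> = ((exp (Im z) + exp (- Im z))/2)^2"
    by (simp add: power2_eq_square exp_minus field_simps exp_add[symmetric])
  also have "\<dots> \<le> (exp \<bar>Im z\<bar>)^2"
    by (intro power_mono) (auto simp: abs_if)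
  finally show ?thesis
    by (meson abs_ge_zero exp_ge_zero power2_le_imp_le)
qed

lemma norm_sin_ge_sinh: "norm (sin (z::complex)) \<ge> (exp \<bar>Im z\<bar> - exp (- \<bar>Im z\<bar>)) / 2"
proof -
  have "((exp \<bar>Im z\<bar> - exp (- \<bar>Im z\<bar>)) / 2)^2 = (exp(2 * Im z) + inverse(exp(2 * Im z)) - 2) / 4"
    by (cases "Im z \<ge> 0") (simp_all add: power2_eq_square exp_minus field_simps exp_add[symmetric])
  also have "\<dots> \<le> (exp(2 * Im z) + inverse(exp(2 * Im z)) - 2 * cos(2 * Re z)) / 4"
    using cos_le_one[of "2 * Re z"] by simp
  also have "\<dots> = norm (sin z) ^ 2"
    by (rule norm_sin_squared[symmetric])
  finally show ?thesis
    by (meson norm_ge_zero power2_le_imp_le)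
qed

lemma norm_sin_ge_cosh:
  assumes "cos (2 * Re z) = -1"
  shows "norm (sin (z::complex)) \<ge> exp \<bar>Im z\<bar> / 2"
proof -
  have "(exp \<bar>Im z\<bar> / 2)^2 \<le> ((exp (Im z) + exp (- Im z))/2)^2"
    by (intro power_mono) (auto simp: abs_if)
  also have "\<dots> = (exp(2 * Im z) + inverse(exp(2 * Im z)) + 2) / 4"
    by (simp add: power2_eq_square exp_minus field_simps exp_add[symmetric])
  also have "\<dots> = norm (sin z) ^ 2"
    using assms by (simp add: norm_sin_squared)
  finally show ?thesis
    by (meson norm_ge_zero power2_le_imp_le)
qed

lemma rectpath_integral_bound:
  fixes k :: "complex \<Rightarrow> complex"
  assumes "Re a \<le> Re b" "Im a \<le> Im b" "continuous_on (path_image (rectpath a b)) k"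
    and B: "\<And>z. z \<in> path_image (rectpath a b) \<Longrightarrow> norm (k z) \<le> B"
  shows "norm (contour_integral (rectpath a b) k) \<le> B * (2 * (Re b - Re a) + 2 * (Im b - Im a))"
proof -
  define a2 a4 where "a2 = Complex (Re b) (Im a)" and "a4 = Complex (Re a) (Im b)"
  have pi: "path_image (rectpath a b) = closed_segment a a2 \<union> closed_segment a2 b \<union> closed_segment b a4 \<union> closed_segment a4 a"
    by (simp add: rectpath_def Let_def path_image_join a2_def a4_def Un_assoc)
  have B0: "B \<ge> 0"
  proof -
    have "a \<in> path_image (rectpath a b)" by (simp add: pi)
    from B[OF this] show ?thesis using norm_ge_zero[of "k a"] by linarith
  qed
  have int: "k contour_integrable_on linepath u v" if "closed_segment u v \<subseteq> path_image (rectpath a b)" for u v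
    using contour_integrable_continuous_linepath continuous_on_subset assms(3) that by blast
  have bnd: "norm (contour_integral (linepath u v) k) \<le> B * norm (v - u)" if "closed_segment u v \<subseteq> path_image (rectpath a b)" for u v
    using has_contour_integral_bound_linepath[OF has_contour_integral_integral[OF int[OF that]] B0] B that by blast
  have i1: "k contour_integrable_on linepath a a2" and i2: "k contour_integrable_on linepath a2 b"
    and i3: "k contour_integrable_on linepath b a4" and i4: "k contour_integrable_on linepath a4 a"
    by (rule int; auto simp: pi)+
  have "contour_integral (rectpath a b) k = contour_integral (linepath a a2) k + (contour_integral (linepath a2 b) k + (contour_integral (linepath b a4) k + contour_integral (linepath a4 a) k))"
    unfolding rectpath_def Let_def a2_def[symmetric] a4_def[symmetric]
    using i1 i2 i3 i4
    by (simp add: contour_integral_join contour_integrable_joinI valid_path_join)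
  also have "norm \<dots> \<le> B * norm (a2 - a) + (B * norm (b - a2) + (B * norm (a4 - b) + B * norm (a - a4)))"
    by (intro norm_triangle_le add_mono bnd order.refl; auto simp: pi)
  also have "norm (a2 - a) = Re b - Re a" using assms(1) by (simp add: a2_def cmod_def)
  also have "norm (b - a2) = Im b - Im a" using assms(2) by (simp add: a2_def cmod_def)
  also have "norm (a4 - b) = Re b - Re a" using assms(1) by (simp add: a4_def cmod_def)
  also have "norm (a - a4) = Im b - Im a" using assms(2) by (simp add: a4_def cmod_def)
  finally show ?thesis by (simp add: algebra_simps)
qed

definition sqp :: "real \<Rightarrow> real \<Rightarrow> complex" where
  "sqp M = rectpath (Complex (-M) (-M)) (Complex M M)"

lemma square_residue_tendsto:
  fixes k :: "complex \<Rightarrow> complex" and P :: "complex set" and B :: "nat \<Rightarrow> real"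
  assumes holo: "k holomorphic_on (UNIV - P)"
    and fin: "\<And>R. finite {p\<in>P. norm p \<le> R}"
    and avoid: "eventually (\<lambda>N. P \<inter> path_image (sqp (real N + 1/2)) = {}) sequentially"
    and bnd: "eventually (\<lambda>N. \<forall>z\<in>path_image (sqp (real N + 1/2)). norm (k z) \<le> B N) sequentially"
    and lim: "(\<lambda>N. B N * (real N + 1)) \<longlonglongrightarrow> 0"
  shows "(\<lambda>N. \<Sum>p\<in>{p\<in>P. p \<in> box (Complex (-(real N+1/2)) (-(real N+1/2))) (Complex (real N+1/2) (real N+1/2))}. residue k p) \<longlonglongrightarrow> 0"
proof (rule Lim_null_comparison)
  show "(\<lambda>N. 4 * (B N * (real N + 1))) \<longlonglongrightarrow> 0"
    using tendsto_mult_right_zero[OF lim, of 4] by simp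
  show "\<forall>\<^sub>F N in sequentially. norm (\<Sum>p\<in>{p\<in>P. p \<in> box (Complex (-(real N+1/2)) (-(real N+1/2))) (Complex (real N+1/2) (real N+1/2))}. residue k p) \<le> 4 * (B N * (real N + 1))"
    using avoid bnd
  proof eventually_elim
    case (elim N)
    define M where "M = real N + 1/2"
    have M0: "M > 0" by (simp add: M_def)
    define a b where "a = Complex (-M) (-M)" and "b = Complex M M"
    define S where "S = box (Complex (-(M+1)) (-(M+1))) (Complex (M+1) (M+1))"
    define pts where "pts = P \<inter> S"
    have ab: "Re a \<le> Re b" "Im a \<le> Im b" using M0 by (auto simp: a_def b_def)
    have cboxS: "cbox a b \<subseteq> S"
      by (auto simp: a_def b_def S_def in_box_complex_iff in_cbox_complex_iff)
    have pimg: "path_image (sqp M) = cbox a b - box a b"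
      unfolding sqp_def a_def[symmetric] b_def[symmetric] using ab by (rule path_image_rectpath_cbox_minus_box)
    have finpts: "finite pts"
    proof (rule finite_subset[OF _ fin[of "2 * (M + 1)"]])
      show "pts \<subseteq> {p \<in> P. cmod p \<le> 2 * (M + 1)}"
      proof safe
        fix p assume "p \<in> pts"
        then have "p \<in> P" "\<bar>Re p\<bar> < M + 1" "\<bar>Im p\<bar> < M + 1"
          by (auto simp: pts_def S_def in_box_complex_iff)
        then show "p \<in> P" "cmod p \<le> 2 * (M + 1)" using cmod_le[of p] by auto
      qed
    qed
    have openS: "open S" unfolding S_def by (rule open_box)
    have connS: "connected S" by (simp add: S_def convex_connected)
    have holo': "k holomorphic_on S - pts"
      by (rule holomorphic_on_subset[OF holo]) (auto simp: pts_def)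
    have avoid': "P \<inter> path_image (sqp M) = {}" using elim by (simp add: M_def)
    have pS: "path_image (sqp M) \<subseteq> S - pts"
      using avoid' pimg cboxS by (auto simp: pts_def)
    have homo: "\<forall>z. z \<notin> S \<longrightarrow> winding_number (sqp M) z = 0"
      using cboxS unfolding sqp_def a_def[symmetric] b_def[symmetric]
      by (auto intro!: winding_number_rectpath_outside ab)
    have RT: "contour_integral (sqp M) k = 2 * pi * \<i> * (\<Sum>p\<in>pts. winding_number (sqp M) p * residue k p)"
      using Residue_theorem[OF openS connS finpts holo' _ _ pS homo]
      by (simp add: sqp_def)
    have "(\<Sum>p\<in>pts. winding_number (sqp M) p * residue k p) = (\<Sum>p\<in>{p\<in>P. p \<in> box a b}. winding_number (sqp M) p * residue k p)"
    proof (rule sum.mono_neutral_right[OF finpts])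
      show "{p \<in> P. p \<in> box a b} \<subseteq> pts" using cboxS box_subset_cbox[of a b] by (auto simp: pts_def)
      show "\<forall>i\<in>pts - {p \<in> P. p \<in> box a b}. winding_number (sqp M) i * residue k i = 0"
      proof
        fix p assume p: "p \<in> pts - {p \<in> P. p \<in> box a b}"
        then have "p \<notin> cbox a b" using avoid' pimg by (auto simp: pts_def)
        then show "winding_number (sqp M) p * residue k p = 0"
          unfolding sqp_def a_def[symmetric] b_def[symmetric]
          using winding_number_rectpath_outside[OF ab] by simp
      qed
    qed
    also have "\<dots> = (\<Sum>p\<in>{p\<in>P. p \<in> box a b}. residue k p)"
      unfolding sqp_def a_def[symmetric] b_def[symmetric] by (intro sum.cong refl) (simp add: winding_number_rectpath)
    finally have eq: "contour_integral (sqp M) k = 2 * pi * \<i> * (\<Sum>p\<in>{p\<in>P. p \<in> box a b}. residue k p)"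
      using RT by simp
    have cont: "continuous_on (path_image (sqp M)) k"
      by (rule holomorphic_on_imp_continuous_on, rule holomorphic_on_subset[OF holo' pS])
    have "norm (contour_integral (sqp M) k) \<le> B N * (2 * (Re b - Re a) + 2 * (Im b - Im a))"
      unfolding sqp_def a_def[symmetric] b_def[symmetric]
      by (rule rectpath_integral_bound[OF ab]) (use cont elim in \<open>auto simp: sqp_def a_def b_def M_def\<close>)
    also have "\<dots> = B N * (8 * M)" by (simp add: a_def b_def)
    finally have "2 * pi * norm (\<Sum>p\<in>{p\<in>P. p \<in> box a b}. residue k p) \<le> B N * (8 * M)"
      by (simp add: eq norm_mult)
    moreover have "a \<in> path_image (sqp M)"
      unfolding sqp_def a_def[symmetric] b_def[symmetric] using ab
      by (simp add: path_image_rectpath)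
    then have "norm (k a) \<le> B N"
      using elim unfolding M_def by blast
    then have "B N \<ge> 0"
      using norm_ge_zero[of "k a"] by linarith
    ultimately have "norm (\<Sum>p\<in>{p\<in>P. p \<in> box a b}. residue k p) \<le> 4 * (B N * (real N + 1))"
    proof -
      assume A: "2 * pi * norm (\<Sum>p\<in>{p\<in>P. p \<in> box a b}. residue k p) \<le> B N * (8 * M)" "B N \<ge> 0"
      have m1: "8 * M \<le> 8 * (real N + 1)" by (simp add: M_def)
      have m2: "8 * (real N + 1) \<le> 2 * pi * 4 * (real N + 1)"
        using pi_gt3 by (intro mult_right_mono) auto
      have "B N * (8 * M) \<le> B N * (2 * pi * 4 * (real N + 1))"
        using A(2) m1 m2 by (intro mult_left_mono) auto
      also have "\<dots> = 2 * pi * (4 * (B N * (real N + 1)))" by (simp add: algebra_simps)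
      finally have "2 * pi * norm (\<Sum>p\<in>{p\<in>P. p \<in> box a b}. residue k p) \<le> 2 * pi * (4 * (B N * (real N + 1)))"
        using A(1) by linarith
      then show ?thesis by (rule mult_left_le_imp_le) (use pi_gt3 in simp)
    qed
    then show ?case by (simp add: a_def b_def M_def)
  qed
qed


lemma sin_pi_eq_0_iff: "sin (complex_of_real pi * z) = 0 \<longleftrightarrow> z \<in> \<int>"
proof
  assume "sin (complex_of_real pi * z) = 0"
  then obtain n :: int where "complex_of_real pi * z = of_real (n * pi)" by (auto simp: sin_eq_0)
  then have "z = of_int n" by (simp add: field_simps)
  then show "z \<in> \<int>" by simp
next
  assume "z \<in> \<int>"
  then obtain n :: int where "z = of_int n" by (auto elim: Ints_cases)
  then show "sin (complex_of_real pi * z) = 0"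
    by (auto simp: sin_eq_0 intro!: exI[of _ n] simp: mult.commute)
qed

lemma norm_cos_pi_int: "norm (cos (complex_of_real pi * of_int n)) = 1"
proof -
  have s: "sin (complex_of_real pi * of_int n) = 0" by (simp add: sin_pi_eq_0_iff)
  have "cos (complex_of_real pi * of_int n) ^ 2 = 1"
    using sin_squared_eq[of "complex_of_real pi * of_int n"] s by simp
  then have "norm (cos (complex_of_real pi * of_int n)) ^ 2 = 1"
    by (metis norm_one norm_power)
  then show ?thesis using norm_ge_zero[of "cos (complex_of_real pi * of_int n)"]
    by (auto simp: power2_eq_1_iff)
qed

lemma residue_over_sin:
  fixes h :: "complex \<Rightarrow> complex" and n :: int
  assumes "0 < d" "d \<le> 1" "h holomorphic_on ball (of_int n) d"
  shows "residue (\<lambda>z. h z / sin (complex_of_real pi * z)) (of_int n)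
           = h (of_int n) / (complex_of_real pi * cos (complex_of_real pi * of_int n))"
proof (rule residue_simple')
  show "open (ball (of_int n :: complex) d)" by simp
  show "of_int n \<in> ball (of_int n :: complex) d" using assms by simp
  have nz: "sin (complex_of_real pi * w) \<noteq> 0" if "w \<in> ball (of_int n) d - {of_int n}" for w
  proof
    assume "sin (complex_of_real pi * w) = 0"
    then obtain m :: int where m: "w = of_int m" using sin_pi_eq_0_iff by (auto elim: Ints_cases)
    with that have "m \<noteq> n" "norm (of_int n - of_int m :: complex) < 1" using assms
      by (auto simp: dist_norm)
    then have "\<bar>real_of_int (n - m)\<bar> < 1"
      by (metis norm_of_int of_int_diff)
    with \<open>m \<noteq> n\<close> show False by linarith
  qed
  show "(\<lambda>z. h z / sin (complex_of_real pi * z)) holomorphic_on ball (of_int n) d - {of_int n}"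
    using nz by (intro holomorphic_intros holomorphic_on_subset[OF assms(3)]) auto
  have s0: "sin (complex_of_real pi * of_int n) = 0" by (simp add: sin_pi_eq_0_iff)
  have c0: "cos (complex_of_real pi * of_int n) \<noteq> 0"
    using norm_cos_pi_int[of n] by auto
  have "((\<lambda>w. sin (complex_of_real pi * w)) has_field_derivative complex_of_real pi * cos (complex_of_real pi * of_int n)) (at (of_int n))"
    by (auto intro!: derivative_eq_intros)
  then have L1: "((\<lambda>w. sin (complex_of_real pi * w) / (w - of_int n)) \<longlongrightarrow> complex_of_real pi * cos (complex_of_real pi * of_int n)) (at (of_int n))"
    using s0 by (simp add: has_field_derivative_iff)
  have L2: "((\<lambda>w. inverse (sin (complex_of_real pi * w) / (w - of_int n))) \<longlongrightarrow> inverse (complex_of_real pi * cos (complex_of_real pi * of_int n))) (at (of_int n))"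
    using c0 by (intro tendsto_inverse L1) simp
  have hc: "isCont h (of_int n)"
    using assms by (intro holomorphic_on_imp_continuous_on[THEN continuous_on_interior]) (auto simp: interior_open)
  have L3: "((\<lambda>w. h w * inverse (sin (complex_of_real pi * w) / (w - of_int n))) \<longlongrightarrow> h (of_int n) * inverse (complex_of_real pi * cos (complex_of_real pi * of_int n))) (at (of_int n))"
    by (intro tendsto_mult L2 isCont_tendsto_compose[OF hc] tendsto_ident_at)
  show "((\<lambda>w. h w / sin (complex_of_real pi * w) * (w - of_int n)) \<longlongrightarrow> h (of_int n) / (complex_of_real pi * cos (complex_of_real pi * of_int n))) (at (of_int n))"
  proof -
    have e1: "(\<lambda>w. h w / sin (complex_of_real pi * w) * (w - of_int n)) = (\<lambda>w. h w * inverse (sin (complex_of_real pi * w) / (w - of_int n)))"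
      by (rule ext) (simp add: inverse_divide)
    have e2: "h (of_int n) / (complex_of_real pi * cos (complex_of_real pi * of_int n)) = h (of_int n) * inverse (complex_of_real pi * cos (complex_of_real pi * of_int n))"
      by (simp add: divide_inverse)
    show ?thesis unfolding e1 e2 by (rule L3)
  qed
qed

lemma finite_Ints_bounded: "finite {p\<in>(\<int>::complex set). norm p \<le> R}"
proof (rule finite_subset)
  show "{p\<in>(\<int>::complex set). norm p \<le> R} \<subseteq> of_int ` {-\<lceil>R\<rceil>..\<lceil>R\<rceil>}"
  proof
    fix p :: complex assume "p \<in> {p\<in>\<int>. norm p \<le> R}"
    then obtain n :: int where n: "p = of_int n" "norm (of_int n :: complex) \<le> R" by (auto elim: Ints_cases)
    then have "\<bar>real_of_int n\<bar> \<le> R" by (metis norm_of_int)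
    then have "n \<in> {-\<lceil>R\<rceil>..\<lceil>R\<rceil>}" by (auto; linarith)
    then show "p \<in> of_int ` {-\<lceil>R\<rceil>..\<lceil>R\<rceil>}" using n by auto
  qed
qed simp

lemma int_not_half: "real_of_int n \<noteq> real N + 1/2" "real_of_int n \<noteq> - (real N + 1/2)"
proof -
  show "real_of_int n \<noteq> real N + 1/2"
  proof
    assume "real_of_int n = real N + 1/2"
    then have "real_of_int (2 * n) = real_of_int (2 * int N + 1)" by simp
    then have "2 * n = 2 * int N + 1" by linarith
    then show False by presburger
  qed
  show "real_of_int n \<noteq> - (real N + 1/2)"
  proof
    assume "real_of_int n = - (real N + 1/2)"
    then have "real_of_int (2 * n) = real_of_int (- 2 * int N - 1)" by simp
    then have "2 * n = - 2 * int N - 1" by linarith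
    then show False by presburger
  qed
qed

lemma Ints_avoid_sqp: "(\<int>::complex set) \<inter> path_image (sqp (real N + 1/2)) = {}"
proof -
  have "p \<notin> path_image (sqp (real N + 1/2))" if "p \<in> \<int>" for p :: complex
  proof
    from that obtain n :: int where n: "p = of_int n" by (auto elim: Ints_cases)
    assume "p \<in> path_image (sqp (real N + 1/2))"
    then show False
      using int_not_half[of n N] n
      by (auto simp: sqp_def path_image_rectpath)
  qed
  then show ?thesis by auto
qed

lemma Ints_in_box: "{p\<in>(\<int>::complex set). p \<in> box (Complex (-(real N+1/2)) (-(real N+1/2))) (Complex (real N+1/2) (real N+1/2))}
   = of_int ` {-int N..int N}"
proof safe
  fix p :: complex assume "p \<in> \<int>" "p \<in> box (Complex (-(real N+1/2)) (-(real N+1/2))) (Complex (real N+1/2) (real N+1/2))"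
  then obtain n :: int where n: "p = of_int n" "\<bar>real_of_int n\<bar> < real N + 1/2"
    by (auto elim!: Ints_cases simp: in_box_complex_iff)
  then have "n \<in> {-int N..int N}" by auto
  then show "p \<in> of_int ` {-int N..int N}" using n by auto
next
  fix n :: int assume "n \<in> {-int N..int N}"
  then show "(of_int n :: complex) \<in> box (Complex (-(real N+1/2)) (-(real N+1/2))) (Complex (real N+1/2) (real N+1/2))"
    by (auto simp: in_box_complex_iff)
qed simp

lemma sqp_facts:
  assumes "z \<in> path_image (sqp M)" "M \<ge> 0"
  shows "\<bar>Re z\<bar> = M \<and> \<bar>Im z\<bar> \<le> M \<or> \<bar>Im z\<bar> = M \<and> \<bar>Re z\<bar> \<le> M"
  using assms by (auto simp: sqp_def path_image_rectpath)

lemma norm_sin_pi_sqp: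
  assumes "z \<in> path_image (sqp (real N + 1/2))"
  shows "norm (sin (complex_of_real pi * z)) \<ge> exp (pi * \<bar>Im z\<bar>) / 4"
proof -
  define M where "M = real N + 1/2"
  have M: "M \<ge> 1/2" by (simp add: M_def)
  have Im: "Im (complex_of_real pi * z) = pi * Im z" and Re: "Re (complex_of_real pi * z) = pi * Re z" by simp_all
  have absIm: "\<bar>Im (complex_of_real pi * z)\<bar> = pi * \<bar>Im z\<bar>" by (simp add: abs_mult)
  from sqp_facts[OF assms[folded M_def]] M
  consider "\<bar>Re z\<bar> = M" | "\<bar>Im z\<bar> = M" by linarith
  then show ?thesis
  proof cases
    case 1
    have "cos (2 * Re (complex_of_real pi * z)) = cos (2 * pi * M)"
      using 1 by (cases "Re z \<ge> 0") (auto simp: Re mult.assoc)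
    also have "2 * pi * M = pi + real N * (2 * pi)" by (simp add: M_def algebra_simps)
    also have "cos \<dots> = -1" by (simp add: cos_add) (metis cos_2npi mult.commute mult.left_commute)
    finally have "exp (pi * \<bar>Im z\<bar>) / 2 \<le> norm (sin (complex_of_real pi * z))"
      using norm_sin_ge_cosh[of "complex_of_real pi * z"] absIm by simp
    then show ?thesis using norm_ge_zero[of "sin (complex_of_real pi * z)"] by linarith
  next
    case 2
    define t where "t = pi * \<bar>Im z\<bar>"
    have "pi * (1/2) \<le> pi * \<bar>Im z\<bar>" using 2 M by (intro mult_left_mono) auto
    then have t: "t \<ge> pi / 2" by (simp add: t_def)
    have "exp (2 * t) \<ge> 1 + 2 * t" by (rule exp_ge_add_one_self)
    then have e2: "exp (2 * t) \<ge> 2" using t pi_gt3 by linarith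
    have ee: "exp t * exp t = exp (2 * t)" by (subst mult_2) (rule exp_add[symmetric])
    have ee2: "exp t * exp t \<ge> 2" unfolding ee by (rule e2)
    have em: "exp (- t) * exp t = 1" by (simp add: exp_minus)
    have "exp (- t) * 2 \<le> exp (- t) * (exp t * exp t)"
      by (rule mult_left_mono[OF ee2]) simp
    also have "\<dots> = exp t" using em by (simp add: mult.assoc[symmetric])
    finally have "exp (- t) * 2 \<le> exp t" .
    moreover have aux: "u / 4 \<le> (u - v) / 2" if "v * 2 \<le> u" for u v :: real using that by (simp add: field_simps)
    ultimately have "exp t / 4 \<le> (exp t - exp (- t)) / 2" by blast
    also have "\<dots> \<le> norm (sin (complex_of_real pi * z))"
      using norm_sin_ge_sinh[of "complex_of_real pi * z"] absIm by (simp add: t_def)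
    finally show ?thesis by (simp add: t_def)
  qed
qed

lemma norm_sqp_ge:
  assumes "z \<in> path_image (sqp M)" "M \<ge> 0"
  shows "norm z \<ge> M"
  using sqp_facts[OF assms] abs_Re_le_cmod[of z] abs_Im_le_cmod[of z] by auto


lemma kernel_bound:
  fixes f :: "complex \<Rightarrow> complex" and K \<tau> c :: real and z :: complex
  assumes fb: "\<And>z. z \<noteq> 0 \<Longrightarrow> norm (f z) \<le> K * exp (\<tau> * \<bar>Im z\<bar>) / (norm z)^2"
    and K: "K \<ge> 0" and tc: "\<tau> + c \<le> pi" and c: "c \<ge> 0"
    and z: "z \<in> path_image (sqp (real N + 1/2))"
    and E: "norm E \<le> exp (c * \<bar>Im z\<bar>)"
  shows "norm (f z * E / sin (complex_of_real pi * z)) \<le> 4 * K / (real N + 1/2)^2"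
proof -
  define M where "M = real N + 1/2"
  define t where "t = \<bar>Im z\<bar>"
  have M0: "M > 0" by (simp add: M_def)
  have nz: "norm z \<ge> M" using norm_sqp_ge[OF z] by (simp add: M_def)
  then have z0: "z \<noteq> 0" using M0 by auto
  have s: "norm (sin (complex_of_real pi * z)) \<ge> exp (pi * t) / 4"
    using norm_sin_pi_sqp[OF z] by (simp add: t_def)
  have f1: "norm (f z) \<le> K * exp (\<tau> * t) / M^2"
  proof -
    have "norm (f z) \<le> K * exp (\<tau> * t) / (norm z)^2" using fb[OF z0] by (simp add: t_def)
    also have "\<dots> \<le> K * exp (\<tau> * t) / M^2"
      using nz M0 K by (intro divide_left_mono mult_nonneg_nonneg power_mono mult_pos_pos) auto
    finally show ?thesis .
  qed
  have "norm (f z * E / sin (complex_of_real pi * z)) = norm (f z) * norm E / norm (sin (complex_of_real pi * z))"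
    by (simp add: norm_mult norm_divide)
  also have "\<dots> \<le> (K * exp (\<tau> * t) / M^2 * exp (c * t)) / (exp (pi * t) / 4)"
    using f1 E s M0 by (intro frac_le mult_mono mult_nonneg_nonneg divide_nonneg_pos) (auto simp: t_def K)
  also have "\<dots> = 4 * K / M^2 * exp ((\<tau> + c - pi) * t)"
    by (simp add: field_simps exp_add[symmetric] exp_diff)
  also have "\<dots> \<le> 4 * K / M^2 * 1"
    using tc K by (intro mult_left_mono) (auto simp: t_def mult_nonpos_nonneg)
  finally show ?thesis by (simp add: M_def)
qed

lemma stepA:
  fixes f :: "complex \<Rightarrow> complex" and K \<tau> \<eta> :: real
  assumes holf: "f holomorphic_on UNIV"
    and fb: "\<And>z. z \<noteq> 0 \<Longrightarrow> norm (f z) \<le> K * exp (\<tau> * \<bar>Im z\<bar>) / (norm z)^2"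
    and K: "K \<ge> 0" and t\<eta>: "\<tau> + \<bar>\<eta>\<bar> \<le> pi"
  shows "(\<lambda>N. \<Sum>n\<in>{-int N..int N}. f (of_int n) * exp (\<i> * of_real \<eta> * of_int n)
            / (of_real pi * cos (of_real pi * of_int n))) \<longlonglongrightarrow> 0"
proof -
  define k where "k z = f z * exp (\<i> * of_real \<eta> * z) / sin (of_real pi * z)" for z
  define B where "B N = 4 * K / (real N + 1/2)^2" for N :: nat
  have lim: "(\<lambda>N. \<Sum>p\<in>{p\<in>\<int>. p \<in> box (Complex (-(real N+1/2)) (-(real N+1/2))) (Complex (real N+1/2) (real N+1/2))}. residue k p) \<longlonglongrightarrow> 0"
  proof (rule square_residue_tendsto[where B=B])
    show "k holomorphic_on UNIV - \<int>"
      unfolding k_def using sin_pi_eq_0_iff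
      by (intro holomorphic_intros holomorphic_on_subset[OF holf]) auto
    show "finite {p \<in> \<int>. cmod p \<le> R}" for R by (rule finite_Ints_bounded)
    show "\<forall>\<^sub>F N in sequentially. \<int> \<inter> path_image (sqp (real N + 1 / 2)) = {}"
      by (simp add: Ints_avoid_sqp)
    show "\<forall>\<^sub>F N in sequentially. \<forall>z\<in>path_image (sqp (real N + 1 / 2)). cmod (k z) \<le> B N"
    proof (intro always_eventually allI ballI)
      fix N z assume z: "z \<in> path_image (sqp (real N + 1 / 2))"
      have "norm (exp (\<i> * of_real \<eta> * z)) \<le> exp (\<bar>\<eta>\<bar> * \<bar>Im z\<bar>)"
        by (simp add: abs_mult[symmetric])
      from kernel_bound[OF fb K _ _ z this] t\<eta>
      show "cmod (k z) \<le> B N" by (simp add: k_def B_def)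
    qed
    show "(\<lambda>N. B N * (real N + 1)) \<longlonglongrightarrow> 0"
      unfolding B_def by real_asymp
  qed
  have eqs: "(\<Sum>p\<in>{p\<in>\<int>. p \<in> box (Complex (-(real N+1/2)) (-(real N+1/2))) (Complex (real N+1/2) (real N+1/2))}. residue k p)
     = (\<Sum>n\<in>{-int N..int N}. f (of_int n) * exp (\<i> * of_real \<eta> * of_int n)
            / (of_real pi * cos (of_real pi * of_int n)))" for N
  proof -
    have "(\<Sum>p\<in>{p\<in>\<int>. p \<in> box (Complex (-(real N+1/2)) (-(real N+1/2))) (Complex (real N+1/2) (real N+1/2))}. residue k p)
        = (\<Sum>n\<in>{-int N..int N}. residue k (of_int n))"
      unfolding Ints_in_box by (rule sum.reindex[unfolded comp_def]) (simp add: inj_on_def)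
    also have "\<dots> = (\<Sum>n\<in>{-int N..int N}. f (of_int n) * exp (\<i> * of_real \<eta> * of_int n)
            / (of_real pi * cos (of_real pi * of_int n)))"
    proof (intro sum.cong refl)
      fix n :: int
      show "residue k (of_int n) = f (of_int n) * exp (\<i> * of_real \<eta> * of_int n)
            / (of_real pi * cos (of_real pi * of_int n))"
        unfolding k_def
        by (rule residue_over_sin[of 1 "\<lambda>z. f z * exp (\<i> * of_real \<eta> * z)" n, simplified])
           (auto intro!: holomorphic_intros holomorphic_on_subset[OF holf])
    qed
    finally show ?thesis .
  qed
  show ?thesis using lim unfolding eqs .
qed


lemma stepC:
  fixes f :: "complex \<Rightarrow> complex" and K \<tau> :: real
  assumes holf: "f holomorphic_on UNIV"
    and fb: "\<And>z. z \<noteq> 0 \<Longrightarrow> norm (f z) \<le> K * exp (\<tau> * \<bar>Im z\<bar>) / (norm z)^2"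
    and K: "K \<ge> 0" and t: "\<tau> \<le> pi"
    and f0: "\<And>n::int. f (of_int n) = 0"
  shows "f w = 0"
proof (cases "w \<in> \<int>")
  case True
  then show ?thesis using f0 by (auto elim: Ints_cases)
next
  case False
  define S where "S = {z. sin (complex_of_real pi * z) \<noteq> 0}"
  have openS: "open S" unfolding S_def
    by (rule open_Collect_neq) (auto intro!: continuous_intros)
  have wS: "w \<in> S" using False sin_pi_eq_0_iff by (simp add: S_def)
  define k where "k z = (f z / sin (complex_of_real pi * z)) / (z - w)" for z
  define B where "B N = 8 * K / (real N + 1/2)^3" for N :: nat
  have lim: "(\<lambda>N. \<Sum>p\<in>{p\<in>insert w \<int>. p \<in> box (Complex (-(real N+1/2)) (-(real N+1/2))) (Complex (real N+1/2) (real N+1/2))}. residue k p) \<longlonglongrightarrow> 0"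
  proof (rule square_residue_tendsto[where B=B])
    show "k holomorphic_on UNIV - insert w \<int>"
      unfolding k_def using sin_pi_eq_0_iff
      by (intro holomorphic_intros holomorphic_on_subset[OF holf]) auto
    show "finite {p \<in> insert w \<int>. cmod p \<le> R}" for R
      by (rule finite_subset[of _ "insert w {p\<in>\<int>. cmod p \<le> R}"]) (auto simp: finite_Ints_bounded)
    have ev: "\<forall>\<^sub>F N in sequentially. 2 * norm w \<le> real N"
      using eventually_ge_at_top[of "nat \<lceil>2 * norm w\<rceil>"]
      by eventually_elim (meson order_trans real_nat_ceiling_ge of_nat_le_iff)
    show "\<forall>\<^sub>F N in sequentially. insert w \<int> \<inter> path_image (sqp (real N + 1 / 2)) = {}"
      using ev
    proof eventually_elim
      case (elim N)
      have "w \<notin> path_image (sqp (real N + 1 / 2))"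
        using norm_sqp_ge[of w "real N + 1/2"] elim norm_ge_zero[of w] by linarith
      then show ?case using Ints_avoid_sqp[of N] by auto
    qed
    show "\<forall>\<^sub>F N in sequentially. \<forall>z\<in>path_image (sqp (real N + 1 / 2)). cmod (k z) \<le> B N"
      using ev
    proof eventually_elim
      case (elim N)
      show ?case
      proof
      fix z assume z: "z \<in> path_image (sqp (real N + 1 / 2))"
      define M where "M = real N + 1/2"
      have M0: "M > 0" by (simp add: M_def)
      have nz: "norm z \<ge> M" using norm_sqp_ge[OF z] by (simp add: M_def)
      have zw1: "norm (z - w) \<ge> norm z - norm w" by (rule norm_triangle_ineq2)
      have zw2: "norm z - norm w \<ge> real N / 2 + 1/2" using nz elim by (simp add: M_def)
      have zw: "norm (z - w) \<ge> M / 2"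
        using zw1 zw2 by (simp add: M_def)
      have "norm (f z * 1 / sin (complex_of_real pi * z)) \<le> 4 * K / M^2"
        using kernel_bound[OF fb K _ _ z, of 0 1] t by (simp add: M_def)
      then have A: "norm (f z / sin (complex_of_real pi * z)) \<le> 4 * K / M^2" by simp
      have "cmod (k z) = norm (f z / sin (complex_of_real pi * z)) / norm (z - w)"
        by (simp add: k_def norm_divide norm_mult)
      also have "\<dots> \<le> (4 * K / M^2) / (M / 2)"
        using A zw M0 K by (intro frac_le) auto
      also have "\<dots> = B N" by (simp add: B_def M_def power3_eq_cube power2_eq_square field_simps)
      finally show "cmod (k z) \<le> B N" .
      qed
    qed
    show "(\<lambda>N. B N * (real N + 1)) \<longlonglongrightarrow> 0"
      unfolding B_def by real_asymp
  qed
  have ev2: "\<forall>\<^sub>F N in sequentially. norm w + 1 \<le> real N"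
    using eventually_ge_at_top[of "nat \<lceil>norm w + 1\<rceil>"]
    by eventually_elim (meson order_trans real_nat_ceiling_ge of_nat_le_iff)
  have "\<forall>\<^sub>F N in sequentially. (\<Sum>p\<in>{p\<in>insert w \<int>. p \<in> box (Complex (-(real N+1/2)) (-(real N+1/2))) (Complex (real N+1/2) (real N+1/2))}. residue k p) = f w / sin (complex_of_real pi * w)"
    using ev2
  proof eventually_elim
    case (elim N)
    have wbox: "w \<in> box (Complex (-(real N+1/2)) (-(real N+1/2))) (Complex (real N+1/2) (real N+1/2))"
      using elim abs_Re_le_cmod[of w] abs_Im_le_cmod[of w] by (auto simp: in_box_complex_iff)
    have set_eq: "{p\<in>insert w \<int>. p \<in> box (Complex (-(real N+1/2)) (-(real N+1/2))) (Complex (real N+1/2) (real N+1/2))}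
        = insert w {p\<in>\<int>. p \<in> box (Complex (-(real N+1/2)) (-(real N+1/2))) (Complex (real N+1/2) (real N+1/2))}"
      using wbox by auto
    have fin: "finite {p\<in>(\<int>::complex set). p \<in> box (Complex (-(real N+1/2)) (-(real N+1/2))) (Complex (real N+1/2) (real N+1/2))}"
      unfolding Ints_in_box by simp
    have res0: "residue k p = 0" if "p \<in> \<int>" for p
    proof -
      from that obtain n :: int where n: "p = of_int n" by (auto elim: Ints_cases)
      have wn: "w \<noteq> of_int n" using False by auto
      define d where "d = min 1 (norm (w - of_int n))"
      have d: "0 < d" "d \<le> 1" using wn by (auto simp: d_def)
      have wnot: "w \<notin> ball (of_int n) d" by (auto simp: d_def dist_norm norm_minus_commute)
      have kk: "k = (\<lambda>z. (f z / (z - w)) / sin (complex_of_real pi * z))"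
        by (auto simp: k_def fun_eq_iff)
      have "residue k (of_int n) = f (of_int n) / (of_int n - w) / (complex_of_real pi * cos (complex_of_real pi * of_int n))"
        unfolding kk
        by (rule residue_over_sin[OF d]) (use wnot in \<open>auto intro!: holomorphic_intros holomorphic_on_subset[OF holf]\<close>)
      then show ?thesis using f0 n by simp
    qed
    have resw: "residue k w = f w / sin (complex_of_real pi * w)"
      unfolding k_def
      by (rule residue_simple[OF openS wS]) (auto simp: S_def intro!: holomorphic_intros holomorphic_on_subset[OF holf])
    have wnI: "w \<notin> \<int>" by (rule False)
    have "w \<notin> {p\<in>(\<int>::complex set). p \<in> box (Complex (-(real N+1/2)) (-(real N+1/2))) (Complex (real N+1/2) (real N+1/2))}"
      using wnI by blast
    then have "(\<Sum>p\<in>insert w {p\<in>\<int>. p \<in> box (Complex (-(real N+1/2)) (-(real N+1/2))) (Complex (real N+1/2) (real N+1/2))}. residue k p)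
       = residue k w + (\<Sum>p\<in>{p\<in>\<int>. p \<in> box (Complex (-(real N+1/2)) (-(real N+1/2))) (Complex (real N+1/2) (real N+1/2))}. residue k p)"
      by (rule sum.insert[OF fin])
    also have "(\<Sum>p\<in>{p\<in>\<int>. p \<in> box (Complex (-(real N+1/2)) (-(real N+1/2))) (Complex (real N+1/2) (real N+1/2))}. residue k p) = 0"
      by (rule sum.neutral) (use res0 in blast)
    finally show ?case unfolding set_eq resw by simp
  qed
  then have "(\<lambda>N. f w / sin (complex_of_real pi * w)) \<longlonglongrightarrow> 0"
    using lim by (rule Lim_transform_eventually[rotated]) 
  then have "f w / sin (complex_of_real pi * w) = 0"
    by (simp add: LIMSEQ_const_iff)
  then show ?thesis using wS by (simp add: S_def)
qed


lemma sum_sym_split: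
  fixes c :: "int \<Rightarrow> 'a::comm_monoid_add"
  shows "(\<Sum>n\<in>{-int N..int N}. c n) = (\<Sum>n<Suc N. c (int n)) + (\<Sum>n<Suc N. if n = 0 then 0 else c (- int n))"
proof (induction N)
  case 0
  then show ?case by simp
next
  case (Suc N)
  have "{-int (Suc N)..int (Suc N)} = insert (int (Suc N)) (insert (- int (Suc N)) {-int N..int N})"
    by auto
  then have "(\<Sum>n\<in>{-int (Suc N)..int (Suc N)}. c n) = c (int (Suc N)) + (c (- int (Suc N)) + (\<Sum>n\<in>{-int N..int N}. c n))"
    by (simp add: sum.insert)
  also have "\<dots> = (\<Sum>n<Suc (Suc N). c (int n)) + (\<Sum>n<Suc (Suc N). if n = 0 then 0 else c (- int n))"
    unfolding Suc.IH by (simp add: algebra_simps)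
  finally show ?case .
qed

lemma stepB:
  fixes b :: "int \<Rightarrow> complex" and L r \<delta> :: real
  assumes bb: "\<And>n. norm (b n) \<le> L * r ^ nat \<bar>n\<bar>" and r: "0 < r" "r < 1" and \<delta>: "\<delta> > 0"
    and S0: "\<And>\<eta>. \<bar>\<eta>\<bar> < \<delta> \<Longrightarrow> (\<lambda>N. \<Sum>n\<in>{-int N..int N}. b n * exp (\<i> * of_real \<eta> * of_int n)) \<longlonglongrightarrow> 0"
  shows "b n = 0"
proof -
  define R0 where "R0 = (1 + 1/r) / 2"
  have R0: "R0 > 1" using r by (simp add: R0_def field_simps)
  have rR0: "r * R0 < 1" "0 \<le> r * R0" using r by (auto simp: R0_def field_simps)
  define Fp where "Fp = Abs_fps (\<lambda>n. b (int n))"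
  define Fm where "Fm = Abs_fps (\<lambda>n. if n = 0 then 0 else b (- int n))"
  have "norm (b 0) \<le> L" using bb[of 0] by simp
  then have L0: "L \<ge> 0" using norm_ge_zero[of "b 0"] by linarith
  have geo: "summable (\<lambda>n. L * (r * R0) ^ n)"
    using rR0 by (intro summable_mult summable_geometric) auto
  have crp: "fps_conv_radius Fp \<ge> ereal R0"
  proof -
    have "summable (\<lambda>n. fps_nth Fp n * of_real R0 ^ n)"
    proof (rule summable_comparison_test'[OF geo])
      fix n show "norm (fps_nth Fp n * of_real R0 ^ n) \<le> L * (r * R0) ^ n"
        using bb[of "int n"] R0 by (simp add: Fp_def norm_mult norm_power power_mult_distrib mult_right_mono)
    qed
    from conv_radius_geI[OF this] R0 show ?thesis by (simp add: fps_conv_radius_def)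
  qed
  have crm: "fps_conv_radius Fm \<ge> ereal R0"
  proof -
    have "summable (\<lambda>n. fps_nth Fm n * of_real R0 ^ n)"
    proof (rule summable_comparison_test'[OF geo])
      fix n show "norm (fps_nth Fm n * of_real R0 ^ n) \<le> L * (r * R0) ^ n"
        using bb[of "- int n"] R0 L0 by (simp add: Fm_def norm_mult norm_power power_mult_distrib mult_right_mono)
    qed
    from conv_radius_geI[OF this] R0 show ?thesis by (simp add: fps_conv_radius_def)
  qed
  have inp: "w \<in> eball 0 (fps_conv_radius Fp)" if "norm w < R0" for w
    using order_less_le_trans[of "ereal (norm w)" "ereal R0" "fps_conv_radius Fp"] that crp by simp
  have inm: "w \<in> eball 0 (fps_conv_radius Fm)" if "norm w < R0" for w
    using order_less_le_trans[of "ereal (norm w)" "ereal R0" "fps_conv_radius Fm"] that crm by simp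
  have arc: "eval_fps Fp (exp (\<i> * of_real \<eta>)) + eval_fps Fm (exp (- (\<i> * of_real \<eta>))) = 0"
    if "\<bar>\<eta>\<bar> < \<delta>" for \<eta>
  proof -
    define w where "w = exp (\<i> * of_real \<eta>)"
    have nw: "norm w = 1" "norm (inverse w) = 1" by (simp_all add: w_def norm_inverse)
    have split: "(\<Sum>n\<in>{-int N..int N}. b n * exp (\<i> * of_real \<eta> * of_int n))
       = (\<Sum>n<Suc N. fps_nth Fp n * w ^ n) + (\<Sum>n<Suc N. fps_nth Fm n * (inverse w) ^ n)" for N
    proof -
      have e1: "exp (\<i> * of_real \<eta> * of_int (int n)) = w ^ n" for n
        unfolding w_def by (subst exp_of_nat_mult[symmetric]) (simp add: mult.commute)
      have e2: "exp (\<i> * of_real \<eta> * of_int (- int n)) = inverse w ^ n" for n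
        unfolding w_def by (subst power_inverse, subst exp_of_nat_mult[symmetric]) (simp add: mult.commute exp_minus)
      show ?thesis unfolding sum_sym_split e1 e2
        by (intro arg_cong2[where f="(+)"] sum.cong refl) (simp_all add: Fp_def Fm_def)
    qed
    have lp: "(\<lambda>N. \<Sum>n<Suc N. fps_nth Fp n * w ^ n) \<longlonglongrightarrow> eval_fps Fp w"
      using sums_eval_fps[of w Fp] inp[of w] nw R0 unfolding sums_def
      by (intro LIMSEQ_Suc) simp
    have lm: "(\<lambda>N. \<Sum>n<Suc N. fps_nth Fm n * (inverse w) ^ n) \<longlonglongrightarrow> eval_fps Fm (inverse w)"
      using sums_eval_fps[of "inverse w" Fm] inm[of "inverse w"] nw R0 unfolding sums_def
      by (intro LIMSEQ_Suc) simp
    have "(\<lambda>N. \<Sum>n\<in>{-int N..int N}. b n * exp (\<i> * of_real \<eta> * of_int n)) \<longlonglongrightarrow> eval_fps Fp w + eval_fps Fm (inverse w)"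
      unfolding split by (rule tendsto_add[OF lp lm])
    with S0[OF that] have "eval_fps Fp w + eval_fps Fm (inverse w) = 0"
      using LIMSEQ_unique by blast
    then show ?thesis by (simp add: w_def exp_minus)
  qed
  define St where "St = {\<zeta>. Re \<zeta> < ln R0} \<inter> {\<zeta>. Re \<zeta> > - ln R0}"
  have lnR0: "ln R0 > 0" using R0 by simp
  have expSt: "norm (exp \<zeta>) < R0" "norm (exp (- \<zeta>)) < R0" if "\<zeta> \<in> St" for \<zeta>
  proof -
    have "exp (Re \<zeta>) < exp (ln R0)" "exp (- Re \<zeta>) < exp (ln R0)" using that by (auto simp: St_def)
    then show "norm (exp \<zeta>) < R0" "norm (exp (- \<zeta>)) < R0" using R0 by simp_all
  qed
  have strip: "eval_fps Fp (exp \<zeta>) + eval_fps Fm (exp (- \<zeta>)) = 0" if "\<zeta> \<in> St" for \<zeta>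
  proof (rule analytic_continuation[where f="\<lambda>\<zeta>. eval_fps Fp (exp \<zeta>) + eval_fps Fm (exp (- \<zeta>))"
        and S=St and U="(\<lambda>\<eta>. \<i> * of_real \<eta>) ` {-\<delta><..<\<delta>}" and \<xi>=0])
    have h1: "(\<lambda>\<zeta>. eval_fps Fp (exp \<zeta>)) holomorphic_on St"
    proof -
      have "(eval_fps Fp \<circ> exp) holomorphic_on St"
        by (rule holomorphic_on_compose) (auto intro!: holomorphic_intros holomorphic_on_eval_fps inp expSt)
      then show ?thesis by (simp add: comp_def)
    qed
    have h2: "(\<lambda>\<zeta>. eval_fps Fm (exp (- \<zeta>))) holomorphic_on St"
    proof -
      have "(eval_fps Fm \<circ> (\<lambda>\<zeta>. exp (- \<zeta>))) holomorphic_on St"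
        by (rule holomorphic_on_compose) (auto intro!: holomorphic_intros holomorphic_on_eval_fps inm expSt)
      then show ?thesis by (simp add: comp_def)
    qed
    show "(\<lambda>\<zeta>. eval_fps Fp (exp \<zeta>) + eval_fps Fm (exp (- \<zeta>))) holomorphic_on St"
      using h1 h2 by (rule holomorphic_on_add)
    show "open St" unfolding St_def
      by (intro open_Int open_halfspace_Re_lt open_halfspace_Re_gt)
    show "connected St" unfolding St_def
      by (intro convex_connected convex_Int convex_halfspace_Re_lt convex_halfspace_Re_gt)
    show "(\<lambda>\<eta>. \<i> * of_real \<eta>) ` {-\<delta><..<\<delta>} \<subseteq> St" using \<delta> lnR0 by (auto simp: St_def)
    show "0 \<in> St" using lnR0 by (simp add: St_def)
    show "0 islimpt (\<lambda>\<eta>. \<i> * complex_of_real \<eta>) ` {- \<delta><..<\<delta>}"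
    proof (rule islimptI)
      fix T :: "complex set" assume T: "0 \<in> T" "open T"
      then obtain e where e: "e > 0" "ball 0 e \<subseteq> T" by (auto simp: open_contains_ball)
      define \<eta> where "\<eta> = min e \<delta> / 2"
      have \<eta>: "\<eta> > 0" "\<eta> < \<delta>" "\<eta> < e" using e \<delta> by (auto simp: \<eta>_def)
      show "\<exists>y\<in>(\<lambda>\<eta>. \<i> * complex_of_real \<eta>) ` {- \<delta><..<\<delta>}. y \<in> T \<and> y \<noteq> 0"
        using \<eta> e by (intro bexI[of _ "\<i> * of_real \<eta>"]) (auto simp: norm_mult)
    qed
    show "eval_fps Fp (exp z) + eval_fps Fm (exp (- z)) = 0"
      if "z \<in> (\<lambda>\<eta>. \<i> * complex_of_real \<eta>) ` {- \<delta><..<\<delta>}" for z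
      using that arc by auto
    show "\<zeta> \<in> St" by (rule that)
  qed
  have ann: "eval_fps Fp w + eval_fps Fm (inverse w) = 0" if "1/R0 < norm w" "norm w < R0" for w
  proof -
    have w0: "w \<noteq> 0" using that R0 by auto
    have n0: "norm w > 0" using w0 by simp
    have l1: "ln (norm w) < ln R0" using that(2) n0 R0 by (subst ln_less_cancel_iff) auto
    have l2: "ln (1/R0) < ln (norm w)" using that(1) n0 R0 by (subst ln_less_cancel_iff) auto
    have l3: "ln (1/R0) = - ln R0" using R0 by (simp add: ln_div)
    have "Ln w \<in> St" using w0 l1 l2 l3 by (auto simp: St_def)
    from strip[OF this] show ?thesis using w0 by (simp add: exp_minus)
  qed
  define E where "E w = (if norm w < 1 then eval_fps Fp w else - eval_fps Fm (inverse w))" for w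
  have iR0: "1/R0 < 1" using R0 by simp
  have E1: "E w = eval_fps Fp w" if "norm w < R0" for w
  proof (cases "norm w < 1")
    case True then show ?thesis by (simp add: E_def)
  next
    case False
    then have "1/R0 < norm w" using iR0 by linarith
    from ann[OF this that] have "eval_fps Fp w = - eval_fps Fm (inverse w)"
      by (simp add: eq_neg_iff_add_eq_0)
    then show ?thesis using False by (simp add: E_def)
  qed
  have E2: "E w = - eval_fps Fm (inverse w)" if "norm w > 1/R0" for w
  proof (cases "norm w < 1")
    case True
    then have "norm w < R0" using R0 by linarith
    from ann[OF that this] have "eval_fps Fp w = - eval_fps Fm (inverse w)"
      by (simp add: eq_neg_iff_add_eq_0)
    then show ?thesis using True by (simp add: E_def)
  next
    case False then show ?thesis by (simp add: E_def)
  qed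
  have holE: "E holomorphic_on UNIV"
  proof -
    have "E holomorphic_on (ball 0 R0 \<union> {w. norm w > 1/R0})"
    proof (rule holomorphic_on_Un)
      show "E holomorphic_on ball 0 R0"
        by (rule holomorphic_transform[of "eval_fps Fp"]) (auto intro!: holomorphic_on_eval_fps inp simp: E1)
      have "(\<lambda>w. - eval_fps Fm (inverse w)) holomorphic_on {w. norm w > 1/R0}"
      proof -
        have "(eval_fps Fm \<circ> inverse) holomorphic_on {w. norm w > 1/R0}"
        proof (rule holomorphic_on_compose)
          show "inverse holomorphic_on {w. norm w > 1/R0}"
            using R0 by (intro holomorphic_intros) (auto simp: order_le_less_trans)
          show "eval_fps Fm holomorphic_on inverse ` {w. norm w > 1/R0}"
          proof (rule holomorphic_on_eval_fps, safe)
            fix w :: complex assume wR: "norm w > 1/R0"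
            have "1/R0 > 0" using R0 by simp
            then have nw: "norm w > 0" using wR by linarith
            have "1 < R0 * norm w" using wR R0 by (simp add: divide_less_eq mult.commute)
            then have "1 / norm w < R0" using nw by (simp add: divide_less_eq mult.commute)
            then have "norm (inverse w) < R0" by (simp add: norm_inverse inverse_eq_divide norm_divide)
            then show "inverse w \<in> eball 0 (fps_conv_radius Fm)" by (rule inm)
          qed
        qed
        then show ?thesis by (intro holomorphic_intros) (simp add: comp_def)
      qed
      then show "E holomorphic_on {w. norm w > 1/R0}"
        by (rule holomorphic_transform) (simp add: E2)
      show "open (ball 0 R0 :: complex set)" by simp
      show "open {w::complex. norm w > 1/R0}"
        by (rule open_Collect_less) (auto intro!: continuous_intros)
    qed
    moreover have "ball 0 R0 \<union> {w. norm w > 1/R0} = (UNIV :: complex set)"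
    proof -
      have "1/R0 < 1" using R0 by simp
      show ?thesis
      proof (rule set_eqI)
        fix w :: complex
        show "w \<in> ball 0 R0 \<union> {w. 1/R0 < norm w} \<longleftrightarrow> w \<in> UNIV"
        proof (cases "norm w < R0")
          case True then show ?thesis by simp
        next
          case False then have "1/R0 < norm w" using \<open>1/R0 < 1\<close> R0 by linarith
          then show ?thesis by simp
        qed
      qed
    qed
    ultimately show ?thesis by simp
  qed
  have limE: "(E \<longlongrightarrow> 0) at_infinity"
  proof -
    have c0: "isCont (eval_fps Fm) 0"
      using continuous_on_eval_fps[of Fm] inm[of 0] R0
      by (intro continuous_on_interior[of "eball 0 (fps_conv_radius Fm)"]) (auto simp: interior_open)
    have "((\<lambda>w. eval_fps Fm (inverse w)) \<longlongrightarrow> eval_fps Fm 0) at_infinity"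
      by (rule isCont_tendsto_compose[OF c0 tendsto_inverse_0])
    moreover have "eval_fps Fm 0 = 0" by (simp add: eval_fps_at_0 Fm_def)
    ultimately have "((\<lambda>w. - eval_fps Fm (inverse w)) \<longlongrightarrow> 0) at_infinity"
      using tendsto_minus by fastforce
    moreover have "eventually (\<lambda>w. - eval_fps Fm (inverse w) = E w) at_infinity"
    proof (rule eventually_at_infinityI[of 1])
      fix w :: complex assume "1 \<le> norm w"
      then have "1/R0 < norm w" using iR0 by linarith
      then show "- eval_fps Fm (inverse w) = E w" by (simp add: E2)
    qed
    ultimately show ?thesis by (rule Lim_transform_eventually)
  qed
  have E0: "E w = 0" for w using Liouville_weak[OF holE limE] .
  have Fp0: "Fp = 0"
  proof (rule eval_fps_eqD)
    show "fps_conv_radius Fp > 0" using order_less_le_trans[of 0 "ereal R0" "fps_conv_radius Fp"] crp R0 by simp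
    show "fps_conv_radius (0::complex fps) > 0" by simp
    have "eventually (\<lambda>z. z \<in> ball (0::complex) 1) (nhds 0)"
      by (intro eventually_nhds_in_open) auto
    then show "eventually (\<lambda>z. eval_fps Fp z = eval_fps 0 z) (nhds 0)"
    proof eventually_elim
      case (elim z)
      then show ?case using E0[of z] E1[of z] R0 by simp
    qed
  qed
  have Fm0: "Fm = 0"
  proof (rule eval_fps_eqD)
    show "fps_conv_radius Fm > 0" using order_less_le_trans[of 0 "ereal R0" "fps_conv_radius Fm"] crm R0 by simp
    show "fps_conv_radius (0::complex fps) > 0" by simp
    have "eventually (\<lambda>z. z \<in> ball (0::complex) 1) (nhds 0)"
      by (intro eventually_nhds_in_open) auto
    then show "eventually (\<lambda>z. eval_fps Fm z = eval_fps 0 z) (nhds 0)"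
    proof eventually_elim
      case (elim u)
      show ?case
      proof (cases "u = 0")
        case True then show ?thesis by (simp add: eval_fps_at_0 Fm_def)
      next
        case False
        have "norm (inverse u) > 1" using elim False by (simp add: norm_inverse one_less_inverse)
        moreover have "1/R0 < 1" using R0 by simp
        ultimately have "norm (inverse u) > 1 / R0" by linarith
        from E2[OF this] E0[of "inverse u"] show ?thesis by simp
      qed
    qed
  qed
  show "b n = 0"
  proof (cases "n \<ge> 0")
    case True
    have "fps_nth Fp (nat n) = 0" using Fp0 by simp
    then show ?thesis using True by (simp add: Fp_def)
  next
    case False
    have "fps_nth Fm (nat (- n)) = 0" using Fm0 by simp
    then show ?thesis using False by (simp add: Fm_def)
  qed
qed


lemma sinc_holo:
  fixes \<epsilon> :: real assumes "\<epsilon> > 0"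
  shows "(\<lambda>z. if z = 0 then 1 else sin (of_real \<epsilon> * z) / (of_real \<epsilon> * z)) holomorphic_on UNIV"
proof -
  define h where "h z = sin (of_real \<epsilon> * z)" for z :: complex
  have hh: "h holomorphic_on UNIV" unfolding h_def by (intro holomorphic_intros)
  have d: "deriv h 0 = of_real \<epsilon>"
    unfolding h_def by (rule DERIV_imp_deriv) (auto intro!: derivative_eq_intros)
  have "(\<lambda>z. if z = 0 then deriv h 0 else (h z - h 0) / (z - 0)) holomorphic_on UNIV"
    by (rule pole_lemma[OF hh]) simp
  then have "(\<lambda>z. (if z = 0 then deriv h 0 else (h z - h 0) / (z - 0)) / of_real \<epsilon>) holomorphic_on UNIV"
    by (intro holomorphic_intros) (use assms in auto)
  then show ?thesis
    by (rule holomorphic_transform) (use assms in \<open>auto simp: d h_def\<close>)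
qed

theorem lemma4p3:
  fixes a :: "int \<Rightarrow> real" and C' r \<rho> C :: real and g :: "complex \<Rightarrow> complex"
  assumes "C' > 0" and "0 < r" and "r < 1"
    and "\<And>n. a n \<noteq> 0"
    and "\<And>n. \<bar>a n\<bar> \<le> C' * r ^ nat \<bar>n\<bar>"
    and "0 < \<rho>" and "\<rho> < pi"
    and "g \<in> bernstein_space \<rho>"
    and "C > 0"
    and "\<And>n. norm (g (of_real (real_of_int n + a n))) \<le> C * \<bar>a n\<bar>"
  shows "\<forall>z. g z = 0"
proof -
  note aC = assms(5) and gn = assms(10)
  have holg: "g holomorphic_on UNIV" using assms(8) by (simp add: bernstein_space_def)
  obtain Cg where Cg: "Cg > 0" "\<And>z. norm (g z) \<le> Cg * exp (\<rho> * \<bar>Im z\<bar>)"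
    using assms(8) by (auto simp: bernstein_space_def)
  define Mg where "Mg = Cg * exp \<rho>"
  have Mg0: "Mg \<ge> 0" using Cg by (simp add: Mg_def)
  have dbound: "norm (deriv g z) \<le> Mg" if "Im z = 0" for z
  proof -
    have "norm ((deriv ^^ 1) g z) \<le> fact 1 * Mg / 1 ^ 1"
    proof (rule Cauchy_inequality)
      show "g holomorphic_on ball z 1" using holg by (rule holomorphic_on_subset) auto
      show "continuous_on (cball z 1) g"
        using holg by (intro holomorphic_on_imp_continuous_on holomorphic_on_subset[OF holg]) auto
      show "(0::real) < 1" by simp
      fix y assume y: "norm (z - y) = 1"
      have "\<bar>Im y\<bar> = \<bar>Im (z - y)\<bar>" using that by simp
      also have "\<dots> \<le> 1" using abs_Im_le_cmod[of "z - y"] y by simp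
      finally have "\<rho> * \<bar>Im y\<bar> \<le> \<rho>" using assms(6) by (simp add: mult_left_le)
      then show "norm (g y) \<le> Mg"
      proof -
        have "exp (\<rho> * \<bar>Im y\<bar>) \<le> exp \<rho>" using \<open>\<rho> * \<bar>Im y\<bar> \<le> \<rho>\<close> by simp
        then have "Cg * exp (\<rho> * \<bar>Im y\<bar>) \<le> Cg * exp \<rho>" using Cg(1) by (intro mult_left_mono) auto
        then show ?thesis using Cg(2)[of y] unfolding Mg_def by linarith
      qed
    qed
    then show ?thesis by simp
  qed
  have gint: "norm (g (of_int n)) \<le> (C + Mg) * C' * r ^ nat \<bar>n\<bar>" for n :: int
  proof -
    define u v where "u = complex_of_real (real_of_int n)" and "v = complex_of_real (real_of_int n + a n)"
    have seg: "closed_segment u v = {z. Im z = 0 \<and> Re z \<in> closed_segment (Re u) (Re v)}"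
      by (simp add: closed_segment_same_Im u_def v_def)
    have "norm (g v - g u) \<le> Mg * norm (v - u)"
    proof (rule field_differentiable_bound[of "closed_segment u v" g "deriv g"])
      show "convex (closed_segment u v)" by simp
      show "(g has_field_derivative deriv g z) (at z within closed_segment u v)" for z
        using holg by (intro holomorphic_derivI) auto
      show "norm (deriv g z) \<le> Mg" if "z \<in> closed_segment u v" for z
        using that seg dbound by auto
    qed auto
    also have "norm (v - u) = \<bar>a n\<bar>" by (simp add: u_def v_def)
    finally have "norm (g v - g u) \<le> Mg * \<bar>a n\<bar>" .
    moreover have "norm (g v) \<le> C * \<bar>a n\<bar>" using gn[of n] by (simp add: v_def)
    ultimately have "norm (g u) \<le> C * \<bar>a n\<bar> + Mg * \<bar>a n\<bar>"
      using norm_triangle_ineq2[of "g u" "g v"] norm_minus_commute[of "g u" "g v"] by linarith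
    then have "norm (g u) \<le> (C + Mg) * \<bar>a n\<bar>" by (simp add: distrib_right)
    also have "\<dots> \<le> (C + Mg) * (C' * r ^ nat \<bar>n\<bar>)"
      using aC[of n] assms(9) Mg0 by (intro mult_left_mono) auto
    finally show ?thesis by (simp add: u_def mult.assoc)
  qed
  \<comment> \<open>damping\<close>
  define \<epsilon> where "\<epsilon> = (pi - \<rho>) / 4"
  have \<epsilon>: "\<epsilon> > 0" using assms(7) by (simp add: \<epsilon>_def)
  define s where "s z = (if z = 0 then 1 else sin (of_real \<epsilon> * z) / (of_real \<epsilon> * z))" for z :: complex
  define f where "f z = g z * s z ^ 2" for z
  have hols: "s holomorphic_on UNIV" unfolding s_def using sinc_holo[OF \<epsilon>] by simp
  have holf: "f holomorphic_on UNIV" unfolding f_def using holg hols by (intro holomorphic_intros) auto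
  define K where "K = Cg / \<epsilon>^2"
  have K0: "K \<ge> 0" using Cg \<epsilon> by (simp add: K_def)
  define \<tau> where "\<tau> = \<rho> + 2 * \<epsilon>"
  have fb: "norm (f z) \<le> K * exp (\<tau> * \<bar>Im z\<bar>) / (norm z)^2" if z0: "z \<noteq> 0" for z
  proof -
    have ns: "norm (s z) \<le> exp (\<epsilon> * \<bar>Im z\<bar>) / (\<epsilon> * norm z)"
    proof -
      have "norm (s z) = norm (sin (of_real \<epsilon> * z)) / (\<epsilon> * norm z)"
        using z0 \<epsilon> by (simp add: s_def norm_divide norm_mult)
      also have "\<dots> \<le> exp \<bar>Im (of_real \<epsilon> * z)\<bar> / (\<epsilon> * norm z)"
        using z0 \<epsilon> by (intro divide_right_mono norm_sin_le_exp) auto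
      also have "\<bar>Im (of_real \<epsilon> * z)\<bar> = \<epsilon> * \<bar>Im z\<bar>" using \<epsilon> by (simp add: abs_mult)
      finally show ?thesis .
    qed
    have "norm (f z) = norm (g z) * norm (s z) ^ 2" by (simp add: f_def norm_mult norm_power)
    also have "\<dots> \<le> (Cg * exp (\<rho> * \<bar>Im z\<bar>)) * (exp (\<epsilon> * \<bar>Im z\<bar>) / (\<epsilon> * norm z)) ^ 2"
      using Cg ns by (intro mult_mono power_mono) auto
    also have "\<dots> = K * exp (\<tau> * \<bar>Im z\<bar>) / (norm z)^2"
      using \<epsilon> z0 by (simp add: K_def \<tau>_def power2_eq_square field_simps exp_add[symmetric] algebra_simps)
    finally show ?thesis .
  qed
  have fint: "norm (f (of_int n)) \<le> (C + Mg) * C' * r ^ nat \<bar>n\<bar>" for n :: int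
  proof -
    have "norm (s (of_int n)) \<le> 1"
    proof (cases "n = 0")
      case False
      have e: "s (of_int n) = complex_of_real (sin (\<epsilon> * real_of_int n)) / (complex_of_real \<epsilon> * complex_of_int n)"
        using False \<epsilon> by (simp add: s_def sin_of_real[symmetric])
      have "norm (s (of_int n)) = \<bar>sin (\<epsilon> * real_of_int n)\<bar> / \<bar>\<epsilon> * real_of_int n\<bar>"
        unfolding e by (simp add: norm_divide norm_mult abs_mult)
      also have "\<dots> \<le> 1"
        using abs_sin_x_le_abs_x[of "\<epsilon> * real_of_int n"] False \<epsilon> by (simp add: divide_le_eq_1)
      finally show ?thesis .
    qed (simp add: s_def)
    then have "norm (f (of_int n)) \<le> norm (g (of_int n))"
      by (simp add: f_def norm_mult norm_power mult_left_le power_le_one)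
    with gint[of n] show ?thesis by linarith
  qed
  define b where "b n = f (of_int n) / cos (complex_of_real pi * of_int n)" for n :: int
  have nb: "norm (b n) = norm (f (of_int n))" for n
    using norm_cos_pi_int[of n] by (simp add: b_def norm_divide)
  have b0: "b n = 0" for n
  proof (rule stepB[where L="(C + Mg) * C'" and r=r and \<delta>="2 * \<epsilon>"])
    show "norm (b n) \<le> (C + Mg) * C' * r ^ nat \<bar>n\<bar>" for n using fint[of n] nb[of n] by simp
    show "0 < r" "r < 1" "0 < 2 * \<epsilon>" using assms(2,3) \<epsilon> by auto
    fix \<eta> :: real assume \<eta>: "\<bar>\<eta>\<bar> < 2 * \<epsilon>"
    have e4: "4 * \<epsilon> = pi - \<rho>" by (simp add: \<epsilon>_def)
    have "\<tau> + \<bar>\<eta>\<bar> \<le> pi" unfolding \<tau>_def using \<eta> e4 by linarith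
    from stepA[OF holf fb K0 this]
    have "(\<lambda>N. complex_of_real pi * (\<Sum>n\<in>{-int N..int N}. f (of_int n) * exp (\<i> * of_real \<eta> * of_int n)
            / (of_real pi * cos (of_real pi * of_int n)))) \<longlonglongrightarrow> complex_of_real pi * 0"
      by (intro tendsto_mult tendsto_const)
    moreover have "complex_of_real pi * (\<Sum>n\<in>{-int N..int N}. f (of_int n) * exp (\<i> * of_real \<eta> * of_int n)
            / (of_real pi * cos (of_real pi * of_int n)))
        = (\<Sum>n\<in>{-int N..int N}. b n * exp (\<i> * of_real \<eta> * of_int n))" for N
      unfolding sum_distrib_left by (intro sum.cong refl) (simp add: b_def)
    ultimately show "(\<lambda>N. \<Sum>n\<in>{-int N..int N}. b n * exp (\<i> * of_real \<eta> * of_int n)) \<longlonglongrightarrow> 0"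
      by simp
  qed
  have f0: "f (of_int n) = 0" for n :: int
    using b0[of n] norm_cos_pi_int[of n] by (auto simp: b_def)
  have fz: "f w = 0" for w
  proof (rule stepC[OF holf fb K0 _ f0])
    have "4 * \<epsilon> = pi - \<rho>" by (simp add: \<epsilon>_def)
    then show "\<tau> \<le> pi" unfolding \<tau>_def using \<epsilon> by linarith
  qed
  have gU: "g z = 0" if "z \<in> {z. Im z > 0}" for z
  proof -
    have z0: "z \<noteq> 0" using that by auto
    have "sin (of_real \<epsilon> * z) \<noteq> 0"
    proof
      assume "sin (of_real \<epsilon> * z) = 0"
      then obtain m :: int where "of_real \<epsilon> * z = of_real (m * pi)" by (auto simp: sin_eq_0)
      then have "Im (of_real \<epsilon> * z) = 0" by (metis Im_complex_of_real)
      then show False using that \<epsilon> by simp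
    qed
    then have "s z \<noteq> 0" using z0 \<epsilon> by (simp add: s_def)
    then show "g z = 0" using fz[of z] by (simp add: f_def)
  qed
  show ?thesis
  proof
    fix z
    show "g z = 0"
    proof (rule analytic_continuation[OF holg _ _ _ _ _ gU])
      show "open (UNIV :: complex set)" by simp
      show "connected (UNIV :: complex set)" by (rule connected_UNIV)
      show "{z. Im z > 0} \<subseteq> UNIV" "\<i> \<in> UNIV" "z \<in> UNIV" by simp_all
      have "open {z. Im z > 0}" by (rule open_halfspace_Im_gt)
      then show "\<i> islimpt {z. Im z > 0}"
        by (intro interior_limit_point) (simp add: interior_open)
    qed
  qed
qed

end
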